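(* Let $a>0$, $\phi\in C^{2n}([-a,a])$, and let $(p_j)_{j\in\mathbb{N}}$ be a sequence of real polynomials such that $p_j^{(i)}\to\phi^{(i)}$ uniformly on $[-a,a]$ for all $0\le i\le 2n$. Then for every spherical harmonic $H_l\in\mathcal{H}_l$, \[ \lim_{j\to\infty}\int_{SS,\mathbf{x}}p_j(\langle\mathbf{x},\mathbf{y}\rangle)H_l(\mathbf{x})=\int_{SS,\mathbf{x}}\phi(\langle\mathbf{x},\mathbf{y}\rangle)H_l(\mathbf{x}) \] pointwise as functions of $\underline{y}\in\overline{\mathbb{B}^m(a)}$ (the closed ball of radius $a$ in $\mathbb{R}^m$) with values in the Grassmann algebra generated by ${y\grave{}}_1,\dots,{y\grave{}}_{2n}$.
   Context: Fix integers $m\ge1$, $n\ge0$. Consider two supervectors $\mathbf{x}=(\underline x,\underline x\grave{})=(x_1,\dots,x_m,{x\grave{}}_1,\dots,{x\grave{}}_{2n})$ and $\mathbf{y}=(y_1,\dots,y_m,{y\grave{}}_1,\dots,{y\grave{}}_{2n})$, where the $4n$ variables ${x\grave{}}_i,{y\grave{}}_i$ are mutually anticommuting generators of a Grassmann algebra and commute with the real variables $x_i,y_i$. Fermionic derivatives $\partial_{{x\grave{}}_j}$ satisfy the graded Leibniz rule (they anticommute with all ${x\grave{}}_k$, $k\ne j$, and ${y\grave{}}_k$, and $\partial_{{x\grave{}}_j}{x\grave{}}_j=1$). Inner product: $\langle\mathbf{x},\mathbf{y}\rangle=\langle\underline x,\underline y\rangle+\langle\underline x\grave{},\underline y\grave{}\rangle$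 with $\langle\underline x,\underline y\rangle=\sum_{i=1}^mx_iy_i$ and $\langle\underline x\grave{},\underline y\grave{}\rangle=-\frac12\sum_{j=1}^n({x\grave{}}_{2j-1}{y\grave{}}_{2j}-{x\grave{}}_{2j}{y\grave{}}_{2j-1})$. For $\phi\in C^{2n}([-a,a])$ the super zonal function is $\phi(\langle\mathbf x,\mathbf y\rangle)=\sum_{j=0}^{2n}\frac{\langle\underline x\grave{},\underline y\grave{}\rangle^j}{j!}\phi^{(j)}(\langle\underline x,\underline y\rangle)$. Put $\underline{x}\grave{}^2=\sum_{j=1}^n{x\grave{}}_{2j-1}{x\grave{}}_{2j}$, $R_x^2=|\underline x|^2-\underline{x}\grave{}^2$. The super Laplace operator in $\mathbf{x}$ is $\nabla^2=\sum_i\partial_{x_i}^2-4\sum_j\partial_{{x\grave{}}_{2j-1}}\partial_{{x\grave{}}_{2j}}$, and $\mathcal{H}_l$ is the space of superpolynomials $H\in\mathbb{R}[x_1,\dots,x_m]\otimes\Lambda_{2n}$ (in $\underline x,\underline x\grave{}$), homogeneous of total degree $l$, with $\nabla^2H=0$. The supersphere integral in $\mathbf{x}$ is $\int_{SS,\mathbf x}f=\sum_{j=0}^n\int_{\mathbb{S}^{m-1}}d\underline{\xi}\int_B\frac{\underline{x}\grave{}^{2j}}{j!}\big[(\frac{\partial}{\partial r^2})^jr^{m-2}f\big]_{r=1}$, where $\underline x=r\underline\xi$, $\frac{\partial}{\partial r^2}=\frac1{2r}\frac{\partial}{\partial r}$, $d\underline\xi$ is surface measure on $\mathbb{S}^{m-1}$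 and $\int_B=\pi^{-n}\partial_{{x\grave{}}_{2n}}\cdots\partial_{{x\grave{}}_1}$. *)

theory Defs
  imports "HOL-Analysis.Analysis" "HOL-Computational_Algebra.Polynomial"
begin

text \<open>An element of the real Grassmann algebra is given by its coefficients on the
monomials e_S = g_{s1} g_{s2} ... g_{sk} (s1 < s2 < ... < sk, S finite).
Generator indices: the fermionic variables x'_1..x'_{2n} are the generators 0..2n-1,
the fermionic variables y'_1..y'_{2n} are the generators 2n..4n-1.\<close>

type_synonym grass = "nat set \<Rightarrow> real"

definition gone :: grass where
  "gone = (\<lambda>S. if S = {} then 1 else 0)"

definition gen :: "nat \<Rightarrow> grass" where
  "gen k = (\<lambda>S. if S = {k} then 1 else 0)"

definition gadd :: "grass \<Rightarrow> grass \<Rightarrow> grass" where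
  "gadd A B = (\<lambda>S. A S + B S)"

definition gscale :: "real \<Rightarrow> grass \<Rightarrow> grass" where
  "gscale c A = (\<lambda>S. c * A S)"

definition gsum :: "('i \<Rightarrow> grass) \<Rightarrow> 'i set \<Rightarrow> grass" where
  "gsum f I = (\<lambda>S. \<Sum>i\<in>I. f i S)"

text \<open>sign of e_T e_U = sign * e_{T \<union> U} for disjoint T, U: number of inversions\<close>
definition gsign :: "nat set \<Rightarrow> nat set \<Rightarrow> real" where
  "gsign T U = (-1) ^ card {(t, u). t \<in> T \<and> u \<in> U \<and> u < t}"

definition gmul :: "grass \<Rightarrow> grass \<Rightarrow> grass" where
  "gmul A B = (\<lambda>S. \<Sum>T\<in>Pow S. gsign T (S - T) * A T * B (S - T))"

fun gpow :: "grass \<Rightarrow> nat \<Rightarrow> grass" where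
  "gpow A 0 = gone"
| "gpow A (Suc k) = gmul A (gpow A k)"

text \<open>Fermionic (left) derivative with respect to generator k, graded Leibniz rule:
  \<partial>_k e_T = (-1)^{#{s\<in>T. s<k}} e_{T-{k}} if k \<in> T, and 0 otherwise.\<close>
definition gderiv :: "nat \<Rightarrow> grass \<Rightarrow> grass" where
  "gderiv k A = (\<lambda>S. if k \<in> S then 0 else (-1) ^ card {s\<in>S. s < k} * A (insert k S))"

text \<open>\<langle>x',y'\<rangle> = -1/2 \<Sum>_{j=1}^n (x'_{2j-1} y'_{2j} - x'_{2j} y'_{2j-1})\<close>
definition fip :: "nat \<Rightarrow> grass" where
  "fip n = gscale (-1/2) (gsum (\<lambda>j. gadd (gmul (gen (2*j)) (gen (2*n + 2*j + 1)))
                                        (gscale (-1) (gmul (gen (2*j+1)) (gen (2*n + 2*j))))) {..<n})"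

text \<open>x'^2 = \<Sum>_{j=1}^n x'_{2j-1} x'_{2j}\<close>
definition xsq :: "nat \<Rightarrow> grass" where
  "xsq n = gsum (\<lambda>j. gmul (gen (2*j)) (gen (2*j+1))) {..<n}"

text \<open>Super zonal function d(\<langle>x,y\<rangle>) built from the derivatives d 0, d 1, ... of a function:
  \<Sum>_{k=0}^{2n} \<langle>x',y'\<rangle>^k / k! * d k (\<langle>x,y\<rangle>)\<close>
definition zonal :: "nat \<Rightarrow> (nat \<Rightarrow> real \<Rightarrow> real) \<Rightarrow> real^'m \<Rightarrow> real^'m \<Rightarrow> grass" where
  "zonal n d x y = gsum (\<lambda>k. gscale (d k (x \<bullet> y) / fact k) (gpow (fip n) k)) {0..2*n}"

fun hderiv :: "real set \<Rightarrow> (real \<Rightarrow> real) \<Rightarrow> nat \<Rightarrow> real \<Rightarrow> real" where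
  "hderiv S f 0 = f"
| "hderiv S f (Suc i) = (\<lambda>x. vector_derivative (hderiv S f i) (at x within S))"

definition Ck_on :: "nat \<Rightarrow> real set \<Rightarrow> (real \<Rightarrow> real) \<Rightarrow> bool" where
  "Ck_on k S f \<longleftrightarrow>
     (\<forall>i<k. \<forall>x\<in>S. (hderiv S f i has_real_derivative hderiv S f (Suc i) x) (at x within S))
     \<and> continuous_on S (hderiv S f k)"

definition pd :: "'m::finite \<Rightarrow> (real^'m \<Rightarrow> real) \<Rightarrow> real^'m \<Rightarrow> real" where
  "pd i f x = deriv (\<lambda>t. f (x + t *\<^sub>R axis i 1)) 0"

text \<open>super Laplacian \<nabla>^2 = \<Sum>_i \<partial>_{x_i}^2 - 4 \<Sum>_j \<partial>_{x'_{2j-1}} \<partial>_{x'_{2j}}\<close>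
definition slap :: "nat \<Rightarrow> (real^'m::finite \<Rightarrow> grass) \<Rightarrow> real^'m \<Rightarrow> grass" where
  "slap n H x = (\<lambda>S. (\<Sum>i\<in>UNIV. pd i (pd i (\<lambda>z. H z S)) x)
                    - 4 * (\<Sum>j<n. gderiv (2*j) (gderiv (2*j+1) (H x)) S))"

text \<open>H \<in> \<H>_l: superpolynomial in R[x_1..x_m] \<otimes> \<Lambda>_{2n} (generated by x'_1..x'_{2n}),
  homogeneous of total degree l, and \<nabla>^2 H = 0.\<close>
definition harmonic_space :: "nat \<Rightarrow> nat \<Rightarrow> (real^'m::finite \<Rightarrow> grass) set" where
  "harmonic_space n l = {H.
     (\<forall>S. polynomial_function (\<lambda>x. H x S))
   \<and> (\<forall>S x. \<not> S \<subseteq> {..<2*n} \<longrightarrow> H x S = 0)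
   \<and> (\<forall>S x. l < card S \<longrightarrow> H x S = 0)
   \<and> (\<forall>S x t. card S \<le> l \<longrightarrow> H (t *\<^sub>R x) S = t ^ (l - card S) * H x S)
   \<and> (\<forall>x. slap n H x = (\<lambda>S. 0))}"

text \<open>integral over the unit sphere S^{m-1} w.r.t. surface measure, via the cone
  construction: \<integral>_{S^{m-1}} g d\<xi> = m \<integral>_{|x|\<le>1} g(x/|x|) dx\<close>
definition sphere_int :: "(real^'m::finite \<Rightarrow> real) \<Rightarrow> real" where
  "sphere_int g = real CARD('m) * integral (cball 0 1) (\<lambda>x. g (x /\<^sub>R norm x))"

text \<open>\<partial>/\<partial>r^2 = 1/(2r) \<partial>/\<partial>r, acting coefficientwise; radial derivative taken
  for r in (0,1] (one-sided at r = 1)\<close>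
definition Dr2 :: "(real \<Rightarrow> grass) \<Rightarrow> real \<Rightarrow> grass" where
  "Dr2 g = (\<lambda>r S. vector_derivative (\<lambda>s. g s S) (at r within {0<..1}) / (2 * r))"

fun bder :: "nat \<Rightarrow> grass \<Rightarrow> grass" where
  "bder 0 A = A"
| "bder (Suc k) A = gderiv k (bder k A)"

text \<open>Berezin integral \<integral>_B = \<pi>^{-n} \<partial>_{x'_{2n}} ... \<partial>_{x'_1}\<close>
definition berezin :: "nat \<Rightarrow> grass \<Rightarrow> grass" where
  "berezin n A = gscale (1 / pi ^ n) (bder (2*n) A)"

definition SSI :: "nat \<Rightarrow> (real^'m::finite \<Rightarrow> grass) \<Rightarrow> grass" where
  "SSI n F = gsum (\<lambda>j. (\<lambda>S. sphere_int (\<lambda>\<xi>.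
       berezin n (gmul (gscale (1 / fact j) (gpow (xsq n) j))
          ((Dr2 ^^ j) (\<lambda>r. gscale (r powr (real CARD('m) - 2)) (F (r *\<^sub>R \<xi>))) 1)) S))) {0..n}"

end

theory Submission
  imports Defs
begin


definition G0 :: "'a::topological_space set \<Rightarrow> (nat \<Rightarrow> 'a \<Rightarrow> real \<Rightarrow> real) \<Rightarrow> ('a \<Rightarrow> real \<Rightarrow> real) \<Rightarrow> bool" where
  "G0 K us u \<longleftrightarrow>
     (\<forall>e>0. eventually (\<lambda>j. \<forall>\<xi>\<in>K. \<forall>r\<in>{1/2..1}. \<bar>us j \<xi> r - u \<xi> r\<bar> < e) sequentially)
   \<and> (\<exists>B. \<forall>\<xi>\<in>K. \<forall>r\<in>{1/2..1}. \<bar>u \<xi> r\<bar> \<le> B)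
   \<and> (\<forall>j. \<forall>r\<in>{1/2..1}. continuous_on K (\<lambda>\<xi>. us j \<xi> r))"

fun GN :: "nat \<Rightarrow> 'a::topological_space set \<Rightarrow> (nat \<Rightarrow> 'a \<Rightarrow> real \<Rightarrow> real) \<Rightarrow> ('a \<Rightarrow> real \<Rightarrow> real) \<Rightarrow> bool" where
  "GN 0 K us u = G0 K us u"
| "GN (Suc N) K us u = (G0 K us u \<and> (\<exists>us' u'.
      (\<forall>j. \<forall>\<xi>\<in>K. \<forall>r\<in>{0<..1}. (us j \<xi> has_real_derivative us' j \<xi> r) (at r within {0<..1}))
    \<and> (\<forall>\<xi>\<in>K. \<forall>r\<in>{0<..1}. (u \<xi> has_real_derivative u' \<xi> r) (at r within {0<..1}))
    \<and> GN N K us' u'))"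

lemma GN_G0: "GN N K us u \<Longrightarrow> G0 K us u"
  by (cases N) auto

lemma GN_Suc_mono: "GN (Suc N) K us u \<Longrightarrow> GN N K us u"
proof (induction N arbitrary: us u)
  case 0 thus ?case by simp
next
  case (Suc N)
  from Suc.prems obtain us' u' where a: "G0 K us u"
    "\<forall>j. \<forall>\<xi>\<in>K. \<forall>r\<in>{0<..1}. (us j \<xi> has_real_derivative us' j \<xi> r) (at r within {0<..1})"
    "\<forall>\<xi>\<in>K. \<forall>r\<in>{0<..1}. (u \<xi> has_real_derivative u' \<xi> r) (at r within {0<..1})"
    "GN (Suc N) K us' u'" by auto
  from Suc.IH[OF a(4)] a(1-3) show ?case by auto
qed

lemma GN_mono: "M \<le> N \<Longrightarrow> GN N K us u \<Longrightarrow> GN M K us u"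
proof (induction N)
  case 0 thus ?case by simp
next
  case (Suc N)
  show ?case
  proof (cases "M = Suc N")
    case True thus ?thesis using Suc by simp
  next
    case False thus ?thesis using Suc GN_Suc_mono by (metis le_SucE)
  qed
qed

lemma abs_add_half: "\<bar>a - c\<bar> < e/2 \<Longrightarrow> \<bar>b - d\<bar> < e/2 \<Longrightarrow> \<bar>(a + b) - (c + d)\<bar> < (e::real)"
  by arith

lemma abs_add_le: "\<bar>a\<bar> \<le> A \<Longrightarrow> \<bar>b\<bar> \<le> B \<Longrightarrow> \<bar>a + b\<bar> \<le> (A + B::real)"
  by arith

lemma abs3_bound: "\<bar>p\<bar> < d \<Longrightarrow> \<bar>q\<bar> \<le> A*d \<Longrightarrow> \<bar>s\<bar> \<le> B*d \<Longrightarrow> d*(A+B+1) \<le> e \<Longrightarrow> \<bar>p+q+s\<bar> < (e::real)"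
proof -
  assume a: "\<bar>p\<bar> < d" "\<bar>q\<bar> \<le> A*d" "\<bar>s\<bar> \<le> B*d" "d*(A+B+1) \<le> e"
  have "d*(A+B+1) = A*d + B*d + d" by (simp add: algebra_simps)
  with a show ?thesis by arith
qed

lemma G0_add: assumes "G0 K us u" "G0 K vs v"
  shows "G0 K (\<lambda>j \<xi> r. us j \<xi> r + vs j \<xi> r) (\<lambda>\<xi> r. u \<xi> r + v \<xi> r)"
proof -
  from assms obtain A B where AB: "\<forall>\<xi>\<in>K. \<forall>r\<in>{1/2..1}. \<bar>u \<xi> r\<bar> \<le> A" "\<forall>\<xi>\<in>K. \<forall>r\<in>{1/2..1}. \<bar>v \<xi> r\<bar> \<le> B"
    unfolding G0_def by blast
  have "\<forall>e>0. eventually (\<lambda>j. \<forall>\<xi>\<in>K. \<forall>r\<in>{1/2..1}. \<bar>(us j \<xi> r + vs j \<xi> r) - (u \<xi> r + v \<xi> r)\<bar> < e) sequentially"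
  proof (intro allI impI)
    fix e :: real assume "e > 0"
    then have "e/2 > 0" by simp
    with assms have "eventually (\<lambda>j. \<forall>\<xi>\<in>K. \<forall>r\<in>{1/2..1}. \<bar>us j \<xi> r - u \<xi> r\<bar> < e/2) sequentially"
       "eventually (\<lambda>j. \<forall>\<xi>\<in>K. \<forall>r\<in>{1/2..1}. \<bar>vs j \<xi> r - v \<xi> r\<bar> < e/2) sequentially"
      unfolding G0_def by blast+
    then show "eventually (\<lambda>j. \<forall>\<xi>\<in>K. \<forall>r\<in>{1/2..1}. \<bar>(us j \<xi> r + vs j \<xi> r) - (u \<xi> r + v \<xi> r)\<bar> < e) sequentially"
      by eventually_elim (auto intro: abs_add_half)
  qed
  moreover have "\<forall>\<xi>\<in>K. \<forall>r\<in>{1/2..1}. \<bar>u \<xi> r + v \<xi> r\<bar> \<le> A + B"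
    by (intro ballI abs_add_le) (use AB in auto)
  moreover have "\<forall>j. \<forall>r\<in>{1/2..1}. continuous_on K (\<lambda>\<xi>. us j \<xi> r + vs j \<xi> r)"
    using assms unfolding G0_def by (auto intro: continuous_on_add)
  ultimately show ?thesis unfolding G0_def by blast
qed

lemma G0_mult: assumes "G0 K us u" "G0 K vs v"
  shows "G0 K (\<lambda>j \<xi> r. us j \<xi> r * vs j \<xi> r) (\<lambda>\<xi> r. u \<xi> r * v \<xi> r)"
proof -
  from assms obtain A0 B0 where AB0: "\<forall>\<xi>\<in>K. \<forall>r\<in>{1/2..1}. \<bar>u \<xi> r\<bar> \<le> A0" "\<forall>\<xi>\<in>K. \<forall>r\<in>{1/2..1}. \<bar>v \<xi> r\<bar> \<le> B0"
    unfolding G0_def by blast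
  define A where "A = max A0 0" define B where "B = max B0 0"
  have AB: "\<forall>\<xi>\<in>K. \<forall>r\<in>{1/2..1}. \<bar>u \<xi> r\<bar> \<le> A" "\<forall>\<xi>\<in>K. \<forall>r\<in>{1/2..1}. \<bar>v \<xi> r\<bar> \<le> B"
    "A \<ge> 0" "B \<ge> 0"
    using AB0 unfolding A_def B_def by force+
  have "\<forall>e>0. eventually (\<lambda>j. \<forall>\<xi>\<in>K. \<forall>r\<in>{1/2..1}. \<bar>us j \<xi> r * vs j \<xi> r - u \<xi> r * v \<xi> r\<bar> < e) sequentially"
  proof (intro allI impI)
    fix e :: real assume e: "e > 0"
    define d where "d = min 1 (e / (A + B + 1))"
    have d12: "d > 0" "d \<le> 1" using e AB(3,4)
      by (auto simp: d_def min_def field_simps)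
    have "d \<le> e / (A + B + 1)" by (simp add: d_def)
    then have "d * (A + B + 1) \<le> e / (A + B + 1) * (A + B + 1)"
      using AB(3,4) by (intro mult_right_mono) auto
    also have "\<dots> = e" using AB(3,4) by simp
    finally have d: "d > 0" "d \<le> 1" "d * (A + B + 1) \<le> e" using d12 by auto
    with assms have "eventually (\<lambda>j. \<forall>\<xi>\<in>K. \<forall>r\<in>{1/2..1}. \<bar>us j \<xi> r - u \<xi> r\<bar> < d) sequentially"
       "eventually (\<lambda>j. \<forall>\<xi>\<in>K. \<forall>r\<in>{1/2..1}. \<bar>vs j \<xi> r - v \<xi> r\<bar> < d) sequentially"
      unfolding G0_def by blast+
    then show "eventually (\<lambda>j. \<forall>\<xi>\<in>K. \<forall>r\<in>{1/2..1}. \<bar>us j \<xi> r * vs j \<xi> r - u \<xi> r * v \<xi> r\<bar> < e) sequentially"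
    proof eventually_elim
      case (elim j)
      show ?case
      proof (intro ballI)
        fix \<xi> r assume "\<xi> \<in> K" "r \<in> {1/2..1::real}"
        define x where "x = us j \<xi> r - u \<xi> r"
        define z where "z = vs j \<xi> r - v \<xi> r"
        have x: "\<bar>x\<bar> < d" and z: "\<bar>z\<bar> < d" using elim \<open>\<xi> \<in> K\<close> \<open>r \<in> _\<close> x_def z_def by auto
        have uA: "\<bar>u \<xi> r\<bar> \<le> A" and vB: "\<bar>v \<xi> r\<bar> \<le> B" using AB \<open>\<xi> \<in> K\<close> \<open>r \<in> _\<close> by auto
        have eq: "us j \<xi> r * vs j \<xi> r - u \<xi> r * v \<xi> r = x * z + u \<xi> r * z + v \<xi> r * x"
          unfolding x_def z_def by (simp add: algebra_simps)
        have 1: "\<bar>x * z\<bar> < d"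
        proof -
          have "\<bar>x\<bar> * \<bar>z\<bar> \<le> d * \<bar>z\<bar>" using x by (intro mult_right_mono) auto
          also have "\<dots> < d * 1" using z d by (intro mult_strict_left_mono) auto
          finally show ?thesis by (simp add: abs_mult)
        qed
        have 2: "\<bar>u \<xi> r * z\<bar> \<le> A * d" using uA z by (simp add: abs_mult mult_mono')
        have 3: "\<bar>v \<xi> r * x\<bar> \<le> B * d" using vB x by (simp add: abs_mult mult_mono')
        have "\<bar>x * z + u \<xi> r * z + v \<xi> r * x\<bar> < e"
          by (rule abs3_bound[OF 1 2 3 d(3)])
        then show "\<bar>us j \<xi> r * vs j \<xi> r - u \<xi> r * v \<xi> r\<bar> < e" using eq by simp
      qed
    qed
  qed
  moreover have "\<forall>\<xi>\<in>K. \<forall>r\<in>{1/2..1}. \<bar>u \<xi> r * v \<xi> r\<bar> \<le> A * B"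
    using AB by (auto simp: abs_mult intro: mult_mono')
  moreover have "\<forall>j. \<forall>r\<in>{1/2..1}. continuous_on K (\<lambda>\<xi>. us j \<xi> r * vs j \<xi> r)"
    using assms unfolding G0_def by (auto intro: continuous_on_mult)
  ultimately show ?thesis unfolding G0_def by blast
qed

lemma G0_zero: "G0 K (\<lambda>j \<xi> r. 0) (\<lambda>\<xi> r. 0)"
  unfolding G0_def by auto

lemma GN_zero: "GN N K (\<lambda>j \<xi> r. 0) (\<lambda>\<xi> r. 0)"
  by (induction N) (auto simp: G0_zero intro!: exI[of _ "\<lambda>j \<xi> r. 0"] exI[of _ "\<lambda>\<xi> r. 0"])

lemma GN_add: "GN N K us u \<Longrightarrow> GN N K vs v \<Longrightarrow>
   GN N K (\<lambda>j \<xi> r. us j \<xi> r + vs j \<xi> r) (\<lambda>\<xi> r. u \<xi> r + v \<xi> r)"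
proof (induction N arbitrary: us u vs v)
  case 0 thus ?case by (simp add: G0_add)
next
  case (Suc N)
  from Suc.prems(1) obtain us' u' where a:
    "\<forall>j. \<forall>\<xi>\<in>K. \<forall>r\<in>{0<..1}. (us j \<xi> has_real_derivative us' j \<xi> r) (at r within {0<..1})"
    "\<forall>\<xi>\<in>K. \<forall>r\<in>{0<..1}. (u \<xi> has_real_derivative u' \<xi> r) (at r within {0<..1})"
    "GN N K us' u'" by auto
  from Suc.prems(2) obtain vs' v' where b:
    "\<forall>j. \<forall>\<xi>\<in>K. \<forall>r\<in>{0<..1}. (vs j \<xi> has_real_derivative vs' j \<xi> r) (at r within {0<..1})"
    "\<forall>\<xi>\<in>K. \<forall>r\<in>{0<..1}. (v \<xi> has_real_derivative v' \<xi> r) (at r within {0<..1})"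
    "GN N K vs' v'" by auto
  show ?case
    apply (simp only: GN.simps)
    apply (intro conjI exI[of _ "\<lambda>j \<xi> r. us' j \<xi> r + vs' j \<xi> r"] exI[of _ "\<lambda>\<xi> r. u' \<xi> r + v' \<xi> r"])
    using Suc.prems apply (simp add: G0_add)
    using a b apply (auto intro!: derivative_eq_intros)[2]
    using Suc.IH[OF a(3) b(3)] .
qed

lemma GN_mult: "GN N K us u \<Longrightarrow> GN N K vs v \<Longrightarrow>
   GN N K (\<lambda>j \<xi> r. us j \<xi> r * vs j \<xi> r) (\<lambda>\<xi> r. u \<xi> r * v \<xi> r)"
proof (induction N arbitrary: us u vs v)
  case 0 thus ?case by (simp add: G0_mult)
next
  case (Suc N)
  from Suc.prems(1) obtain us' u' where a:
    "\<forall>j. \<forall>\<xi>\<in>K. \<forall>r\<in>{0<..1}. (us j \<xi> has_real_derivative us' j \<xi> r) (at r within {0<..1})"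
    "\<forall>\<xi>\<in>K. \<forall>r\<in>{0<..1}. (u \<xi> has_real_derivative u' \<xi> r) (at r within {0<..1})"
    "GN N K us' u'" by auto
  from Suc.prems(2) obtain vs' v' where b:
    "\<forall>j. \<forall>\<xi>\<in>K. \<forall>r\<in>{0<..1}. (vs j \<xi> has_real_derivative vs' j \<xi> r) (at r within {0<..1})"
    "\<forall>\<xi>\<in>K. \<forall>r\<in>{0<..1}. (v \<xi> has_real_derivative v' \<xi> r) (at r within {0<..1})"
    "GN N K vs' v'" by auto
  have u: "GN N K us u" and v: "GN N K vs v" using Suc.prems GN_Suc_mono by blast+
  have "GN N K (\<lambda>j \<xi> r. us' j \<xi> r * vs j \<xi> r + us j \<xi> r * vs' j \<xi> r)
                (\<lambda>\<xi> r. u' \<xi> r * v \<xi> r + u \<xi> r * v' \<xi> r)"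
    using GN_add[OF Suc.IH[OF a(3) v] Suc.IH[OF u b(3)]] .
  then show ?case
    apply (simp only: GN.simps)
    apply (intro conjI exI[of _ "\<lambda>j \<xi> r. us' j \<xi> r * vs j \<xi> r + us j \<xi> r * vs' j \<xi> r"]
        exI[of _ "\<lambda>\<xi> r. u' \<xi> r * v \<xi> r + u \<xi> r * v' \<xi> r"])
    using Suc.prems apply (simp add: G0_mult)
    using a b apply (auto intro!: derivative_eq_intros)[2]
    by assumption
qed

lemma GN_sum: "(\<And>i. i \<in> I \<Longrightarrow> GN N K (us i) (u i)) \<Longrightarrow>
   GN N K (\<lambda>j \<xi> r. \<Sum>i\<in>I. us i j \<xi> r) (\<lambda>\<xi> r. \<Sum>i\<in>I. u i \<xi> r)"
proof (cases "finite I")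
  case False thus ?thesis by (simp add: GN_zero)
next
  case True
  assume "\<And>i. i \<in> I \<Longrightarrow> GN N K (us i) (u i)"
  with True show ?thesis
  proof (induction I rule: finite_induct)
    case empty thus ?case by (simp add: GN_zero)
  next
    case (insert x F)
    then show ?case by (simp add: GN_add)
  qed
qed



lemma G0_transform:
  assumes g: "G0 K us u"
    and e1: "\<forall>j. \<forall>\<xi>\<in>K. \<forall>r\<in>{1/2..1}. us j \<xi> r = vs j \<xi> r"
    and e2: "\<forall>\<xi>\<in>K. \<forall>r\<in>{1/2..1}. u \<xi> r = v \<xi> r"
  shows "G0 K vs v"
proof -
  have c: "\<forall>j. \<forall>r\<in>{1/2..1}. continuous_on K (\<lambda>\<xi>. vs j \<xi> r)"
  proof (intro allI ballI)
    fix j and r :: real assume r: "r \<in> {1/2..1}"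
    have "continuous_on K (\<lambda>\<xi>. us j \<xi> r)" using g r by (simp add: G0_def)
    moreover have "\<forall>\<xi>\<in>K. us j \<xi> r = vs j \<xi> r" using e1 r by blast
    ultimately show "continuous_on K (\<lambda>\<xi>. vs j \<xi> r)" using continuous_on_cong by fastforce
  qed
  have u1: "\<forall>e>0. eventually (\<lambda>j. \<forall>\<xi>\<in>K. \<forall>r\<in>{1/2..1}. \<bar>vs j \<xi> r - v \<xi> r\<bar> < e) sequentially"
  proof (intro allI impI)
    fix e :: real assume "e > 0"
    with g have "eventually (\<lambda>j. \<forall>\<xi>\<in>K. \<forall>r\<in>{1/2..1}. \<bar>us j \<xi> r - u \<xi> r\<bar> < e) sequentially"
      unfolding G0_def by blast
    then show "eventually (\<lambda>j. \<forall>\<xi>\<in>K. \<forall>r\<in>{1/2..1}. \<bar>vs j \<xi> r - v \<xi> r\<bar> < e) sequentially"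
      by eventually_elim (use e1 e2 in simp)
  qed
  from g obtain B where "\<forall>\<xi>\<in>K. \<forall>r\<in>{1/2..1}. \<bar>u \<xi> r\<bar> \<le> B" unfolding G0_def by blast
  then have "\<forall>\<xi>\<in>K. \<forall>r\<in>{1/2..1}. \<bar>v \<xi> r\<bar> \<le> B" using e2 by simp
  then show ?thesis using u1 c unfolding G0_def by blast
qed

lemma GN_transform:
  assumes "GN N K us u"
    and "\<forall>j. \<forall>\<xi>\<in>K. \<forall>r\<in>{0<..1}. us j \<xi> r = vs j \<xi> r"
    and "\<forall>\<xi>\<in>K. \<forall>r\<in>{0<..1}. u \<xi> r = v \<xi> r"
  shows "GN N K vs v"
proof -
  have sub: "{1/2..1} \<subseteq> {0<..1::real}" by auto
  have e1: "\<forall>j. \<forall>\<xi>\<in>K. \<forall>r\<in>{1/2..1}. us j \<xi> r = vs j \<xi> r" and e2: "\<forall>\<xi>\<in>K. \<forall>r\<in>{1/2..1}. u \<xi> r = v \<xi> r"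
    using assms(2,3) sub by blast+
  have g0: "G0 K vs v" using G0_transform[OF GN_G0[OF assms(1)] e1 e2] .
  show ?thesis
  proof (cases N)
    case 0 thus ?thesis using g0 by simp
  next
    case (Suc M)
    from assms(1) obtain us' u' where a:
      "\<forall>j. \<forall>\<xi>\<in>K. \<forall>r\<in>{0<..1}. (us j \<xi> has_real_derivative us' j \<xi> r) (at r within {0<..1})"
      "\<forall>\<xi>\<in>K. \<forall>r\<in>{0<..1}. (u \<xi> has_real_derivative u' \<xi> r) (at r within {0<..1})"
      "GN M K us' u'" using assms(1) unfolding Suc GN.simps by blast
    have d1: "\<forall>j. \<forall>\<xi>\<in>K. \<forall>r\<in>{0<..1}. (vs j \<xi> has_real_derivative us' j \<xi> r) (at r within {0<..1})"
    proof (intro allI ballI)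
      fix j \<xi> r assume "\<xi> \<in> K" "r \<in> {0<..1::real}"
      then show "(vs j \<xi> has_real_derivative us' j \<xi> r) (at r within {0<..1})"
      proof -
        have "(us j \<xi> has_real_derivative us' j \<xi> r) (at r within {0<..1})" using a(1) \<open>\<xi> \<in> K\<close> \<open>r \<in> _\<close> by blast
        then show ?thesis by (rule has_field_derivative_transform_within[where d=1]) (use assms(2) \<open>\<xi> \<in> K\<close> \<open>r \<in> _\<close> in auto)
      qed
    qed
    have d2: "\<forall>\<xi>\<in>K. \<forall>r\<in>{0<..1}. (v \<xi> has_real_derivative u' \<xi> r) (at r within {0<..1})"
    proof (intro allI ballI)
      fix \<xi> r assume "\<xi> \<in> K" "r \<in> {0<..1::real}"
      then show "(v \<xi> has_real_derivative u' \<xi> r) (at r within {0<..1})"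
      proof -
        have "(u \<xi> has_real_derivative u' \<xi> r) (at r within {0<..1})" using a(2) \<open>\<xi> \<in> K\<close> \<open>r \<in> _\<close> by blast
        then show ?thesis by (rule has_field_derivative_transform_within[where d=1]) (use assms(3) \<open>\<xi> \<in> K\<close> \<open>r \<in> _\<close> in auto)
      qed
    qed
    show ?thesis unfolding Suc GN.simps using g0 d1 d2 a(3) by blast
  qed
qed

lemma G0_cfun:
  assumes "compact K" "continuous_on K c"
  shows "G0 K (\<lambda>j \<xi> r. c \<xi>) (\<lambda>\<xi> r. c \<xi>)"
proof -
  have "bounded (c ` K)" by (intro compact_imp_bounded compact_continuous_image assms)
  then obtain B where "\<forall>x\<in>c ` K. norm x \<le> B" by (auto simp: bounded_iff)
  then have "\<forall>\<xi>\<in>K. \<forall>r\<in>{1/2..1::real}. \<bar>c \<xi>\<bar> \<le> B" by auto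
  then show ?thesis using assms unfolding G0_def by auto
qed

lemma GN_cfun:
  assumes "compact K" "continuous_on K c"
  shows "GN N K (\<lambda>j \<xi> r. c \<xi>) (\<lambda>\<xi> r. c \<xi>)"
proof (cases N)
  case 0 thus ?thesis using G0_cfun[OF assms] by simp
next
  case (Suc M)
  show ?thesis unfolding Suc GN.simps
    by (intro conjI G0_cfun[OF assms] exI[of _ "\<lambda>j \<xi> r. 0"] exI[of _ "\<lambda>\<xi> r. 0"] GN_zero)
       (auto intro!: derivative_eq_intros)
qed

lemma powr_bounded_half: "\<exists>B. \<forall>r\<in>{1/2..1::real}. \<bar>r powr e\<bar> \<le> B"
proof -
  have "continuous_on {1/2..1::real} (\<lambda>r. r powr e)"
    by (rule continuous_on_powr[OF continuous_on_id continuous_on_const]) auto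
  then have "bounded ((\<lambda>r. r powr e) ` {1/2..1::real})"
    by (intro compact_imp_bounded compact_continuous_image) auto
  then obtain B where "\<forall>x\<in>(\<lambda>r. r powr e) ` {1/2..1::real}. norm x \<le> B" unfolding bounded_iff by blast
  then show ?thesis by auto
qed

lemma G0_cpow:
  assumes "compact K" "continuous_on K c"
  shows "G0 K (\<lambda>j \<xi> r. c \<xi> * r powr e) (\<lambda>\<xi> r. c \<xi> * r powr e)"
proof -
  have "bounded (c ` K)" by (intro compact_imp_bounded compact_continuous_image assms)
  then obtain B where B: "\<forall>x\<in>c ` K. norm x \<le> B" by (auto simp: bounded_iff)
  obtain C where C: "\<forall>r\<in>{1/2..1::real}. \<bar>r powr e\<bar> \<le> C" using powr_bounded_half by blast
  have "\<forall>\<xi>\<in>K. \<forall>r\<in>{1/2..1::real}. \<bar>c \<xi> * r powr e\<bar> \<le> B * C"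
  proof (intro ballI)
    fix \<xi> r assume a: "\<xi> \<in> K" "r \<in> {1/2..1::real}"
    have "\<bar>c \<xi>\<bar> \<le> B" using B a(1) by simp
    moreover have "\<bar>r powr e\<bar> \<le> C" using C a(2) by blast
    ultimately show "\<bar>c \<xi> * r powr e\<bar> \<le> B * C" unfolding abs_mult
      by (rule mult_mono) (use \<open>\<bar>c \<xi>\<bar> \<le> B\<close> in auto)
  qed
  moreover have "\<forall>j. \<forall>r\<in>{1/2..1}. continuous_on K (\<lambda>\<xi>. c \<xi> * r powr e)"
    using continuous_on_mult[OF assms(2) continuous_on_const] by blast
  moreover have "\<forall>\<epsilon>>0. eventually (\<lambda>j. \<forall>\<xi>\<in>K. \<forall>r\<in>{1/2..1}. \<bar>c \<xi> * r powr e - c \<xi> * r powr e\<bar> < \<epsilon>) sequentially"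
    by simp
  ultimately show ?thesis unfolding G0_def by blast
qed

lemma GN_cpow:
  assumes "compact K" "continuous_on K c"
  shows "GN N K (\<lambda>j \<xi> r. c \<xi> * r powr e) (\<lambda>\<xi> r. c \<xi> * r powr e)"
  using assms(2)
proof (induction N arbitrary: c e)
  case 0 thus ?case using G0_cpow[OF assms(1)] by simp
next
  case (Suc N)
  have cc: "continuous_on K (\<lambda>\<xi>. c \<xi> * e)" using continuous_on_mult[OF Suc.prems continuous_on_const] .
  have d: "((\<lambda>r. c \<xi> * r powr e) has_real_derivative (c \<xi> * e) * r powr (e - 1)) (at r within {0<..1})"
    if "r \<in> {0<..1}" for \<xi> r
  proof -
    have "r > 0" using that by simp
    have "((\<lambda>r. r powr e) has_real_derivative e * r powr (e - 1)) (at r)"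
      by (rule has_real_derivative_powr[OF \<open>r > 0\<close>])
    from DERIV_cmult[OF this, of "c \<xi>"]
    have "((\<lambda>r. c \<xi> * r powr e) has_real_derivative c \<xi> * (e * r powr (e - 1))) (at r within {0<..1})"
      by (rule has_field_derivative_at_within)
    then show ?thesis by (simp only: mult.assoc)
  qed
  show ?case unfolding GN.simps
    apply (intro conjI G0_cpow[OF assms(1) Suc.prems])
    apply (rule exI[of _ "\<lambda>j \<xi> r. (c \<xi> * e) * r powr (e - 1)"])
    apply (rule exI[of _ "\<lambda>\<xi> r. (c \<xi> * e) * r powr (e - 1)"])
    apply (intro conjI allI ballI)
    subgoal using d by blast
    subgoal using d by blast
    subgoal using Suc.IH[OF cc, of "e - 1"] by simp
    done
qed

lemma G0_psi:
  fixes qs :: "nat \<Rightarrow> nat \<Rightarrow> real \<Rightarrow> real" and Q :: "nat \<Rightarrow> real \<Rightarrow> real"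
  assumes qc: "\<forall>i j. continuous_on UNIV (qs i j)"
    and Qc: "continuous_on {-a..a} (Q i)"
    and uc: "uniform_limit {-a..a} (qs i) (Q i) sequentially"
    and cc: "continuous_on K c" "\<forall>\<xi>\<in>K. \<bar>c \<xi>\<bar> \<le> a"
  shows "G0 K (\<lambda>j \<xi> r. qs i j (r * c \<xi>)) (\<lambda>\<xi> r. Q i (r * c \<xi>))"
proof -
  have inI: "r * c \<xi> \<in> {-a..a}" if "\<xi> \<in> K" "r \<in> {1/2..1}" for \<xi> r
  proof -
    have "\<bar>r * c \<xi>\<bar> = r * \<bar>c \<xi>\<bar>" using that by (simp add: abs_mult)
    also have "\<dots> \<le> 1 * a" using that cc(2) by (intro mult_mono) auto
    finally show ?thesis by auto
  qed
  have "bounded (Q i ` {-a..a})" by (intro compact_imp_bounded compact_continuous_image Qc) auto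
  then obtain B where B: "\<forall>x\<in>{-a..a}. \<bar>Q i x\<bar> \<le> B" by (auto simp: bounded_iff)
  have 1: "\<forall>e>0. eventually (\<lambda>j. \<forall>\<xi>\<in>K. \<forall>r\<in>{1/2..1}. \<bar>qs i j (r * c \<xi>) - Q i (r * c \<xi>)\<bar> < e) sequentially"
  proof (intro allI impI)
    fix e :: real assume "e > 0"
    with uc have "eventually (\<lambda>j. \<forall>x\<in>{-a..a}. dist (qs i j x) (Q i x) < e) sequentially"
      by (auto simp: uniform_limit_iff)
    then show "eventually (\<lambda>j. \<forall>\<xi>\<in>K. \<forall>r\<in>{1/2..1}. \<bar>qs i j (r * c \<xi>) - Q i (r * c \<xi>)\<bar> < e) sequentially"
      by eventually_elim (use inI in \<open>auto simp: dist_real_def\<close>)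
  qed
  have 2: "\<forall>\<xi>\<in>K. \<forall>r\<in>{1/2..1}. \<bar>Q i (r * c \<xi>)\<bar> \<le> B" using B inI by auto
  have 3: "\<forall>j. \<forall>r\<in>{1/2..1}. continuous_on K (\<lambda>\<xi>. qs i j (r * c \<xi>))"
  proof (intro allI ballI)
    fix j r
    show "continuous_on K (\<lambda>\<xi>. qs i j (r * c \<xi>))"
      using continuous_on_compose2[OF qc[rule_format, of i j] continuous_on_mult[OF continuous_on_const cc(1)]]
      by auto
  qed
  show ?thesis unfolding G0_def using 1 2 3 by blast
qed

lemma GN_psi:
  fixes qs :: "nat \<Rightarrow> nat \<Rightarrow> real \<Rightarrow> real" and Q :: "nat \<Rightarrow> real \<Rightarrow> real"
  assumes qd: "\<forall>i<M. \<forall>j x. (qs i j has_real_derivative qs (Suc i) j x) (at x)"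
    and Qd: "\<forall>i<M. \<forall>x\<in>{-a..a}. (Q i has_real_derivative Q (Suc i) x) (at x within {-a..a})"
    and qc: "\<forall>i j. continuous_on UNIV (qs i j)"
    and Qc: "\<forall>i\<le>M. continuous_on {-a..a} (Q i)"
    and uc: "\<forall>i\<le>M. uniform_limit {-a..a} (qs i) (Q i) sequentially"
    and cc: "continuous_on K c" "\<forall>\<xi>\<in>K. \<bar>c \<xi>\<bar> \<le> a" "compact K"
  shows "i + N \<le> M \<Longrightarrow> GN N K (\<lambda>j \<xi> r. qs i j (r * c \<xi>)) (\<lambda>\<xi> r. Q i (r * c \<xi>))"
proof (induction N arbitrary: i)
  case 0
  then show ?case using G0_psi[OF qc, where a=a and Q=Q and i=i and K=K and c=c] Qc uc cc by simp
next
  case (Suc N)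
  have g0: "G0 K (\<lambda>j \<xi> r. qs i j (r * c \<xi>)) (\<lambda>\<xi> r. Q i (r * c \<xi>))"
    using G0_psi[OF qc, where a=a and Q=Q and i=i and K=K and c=c] Qc uc cc Suc.prems by simp
  have IH: "GN N K (\<lambda>j \<xi> r. qs (Suc i) j (r * c \<xi>) * c \<xi>) (\<lambda>\<xi> r. Q (Suc i) (r * c \<xi>) * c \<xi>)"
    using GN_mult[OF Suc.IH[of "Suc i"] GN_cfun[OF cc(3) cc(1)]] Suc.prems by simp
  have iM: "i < M" using Suc.prems by simp
  have d1: "((\<lambda>r. qs i j (r * c \<xi>)) has_real_derivative qs (Suc i) j (r * c \<xi>) * c \<xi>) (at r within {0<..1})"
    for j \<xi> r
  proof -
    have "((\<lambda>r. r * c \<xi>) has_real_derivative 1 * c \<xi>) (at r within {0<..1})"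
      by (rule DERIV_cmult_right[OF DERIV_ident])
    then have g: "((\<lambda>r. r * c \<xi>) has_real_derivative c \<xi>) (at r within {0<..1})" by simp
    show ?thesis by (rule DERIV_chain2[OF qd[rule_format, OF iM] g])
  qed
  have d2: "((\<lambda>r. Q i (r * c \<xi>)) has_real_derivative Q (Suc i) (r * c \<xi>) * c \<xi>) (at r within {0<..1})"
    if "\<xi> \<in> K" "r \<in> {0<..1}" for \<xi> r
  proof -
    have inI: "s * c \<xi> \<in> {-a..a}" if "s \<in> {0<..1}" for s
    proof -
      have "\<bar>s * c \<xi>\<bar> = s * \<bar>c \<xi>\<bar>" using that by (simp add: abs_mult)
      also have "\<dots> \<le> 1 * a" using that cc(2) \<open>\<xi> \<in> K\<close> by (intro mult_mono) auto
      finally show ?thesis by auto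
    qed
    have sub: "(\<lambda>s. s * c \<xi>) ` {0<..1} \<subseteq> {-a..a}" using inI by auto
    have "(Q i has_real_derivative Q (Suc i) (r * c \<xi>)) (at (r * c \<xi>) within ((\<lambda>s. s * c \<xi>) ` {0<..1}))"
    proof (rule DERIV_subset[OF _ sub])
      show "(Q i has_real_derivative Q (Suc i) (r * c \<xi>)) (at (r * c \<xi>) within {-a..a})"
        using Qd iM inI[OF that(2)] by blast
    qed
    have "((\<lambda>r. r * c \<xi>) has_real_derivative 1 * c \<xi>) (at r within {0<..1})"
      by (rule DERIV_cmult_right[OF DERIV_ident])
    then have g: "((\<lambda>r. r * c \<xi>) has_real_derivative c \<xi>) (at r within {0<..1})" by simp
    from DERIV_image_chain[OF \<open>(Q i has_real_derivative _) _\<close> g]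
    show ?thesis by (simp add: o_def)
  qed
  show ?case unfolding GN.simps
    apply (intro conjI g0)
    apply (rule exI[of _ "\<lambda>j \<xi> r. qs (Suc i) j (r * c \<xi>) * c \<xi>"])
    apply (rule exI[of _ "\<lambda>\<xi> r. Q (Suc i) (r * c \<xi>) * c \<xi>"])
    using d1 d2 IH by auto
qed



definition Dr2s :: "(real \<Rightarrow> real) \<Rightarrow> real \<Rightarrow> real" where
  "Dr2s f r = vector_derivative f (at r within {0<..1}) / (2 * r)"

lemma Dr2_apply: "Dr2 g r S = vector_derivative (\<lambda>s. g s S) (at r within {0<..1}) / (2 * r)"
  by (simp add: Dr2_def)

lemma Dr2s_apply: "Dr2s f r = vector_derivative f (at r within {0<..1}) / (2 * r)"
  by (simp add: Dr2s_def)

lemma Dr2_coeff: "(Dr2 ^^ N) g r S = (Dr2s ^^ N) (\<lambda>r. g r S) r"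
proof (induction N arbitrary: r)
  case 0 thus ?case by simp
next
  case (Suc N)
  have "(\<lambda>s. (Dr2 ^^ N) g s S) = (Dr2s ^^ N) (\<lambda>r. g r S)" using Suc.IH by (intro ext) simp
  then have eq: "vector_derivative (\<lambda>s. (Dr2 ^^ N) g s S) (at r within {0<..1}) =
      vector_derivative ((Dr2s ^^ N) (\<lambda>r. g r S)) (at r within {0<..1})" by (simp only:)
  have "(Dr2 ^^ Suc N) g r S = Dr2 ((Dr2 ^^ N) g) r S" by simp
  also have "\<dots> = vector_derivative (\<lambda>s. (Dr2 ^^ N) g s S) (at r within {0<..1}) / (2 * r)"
    by (rule Dr2_apply)
  also have "\<dots> = vector_derivative ((Dr2s ^^ N) (\<lambda>r. g r S)) (at r within {0<..1}) / (2 * r)"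
    by (simp only: eq)
  also have "\<dots> = Dr2s ((Dr2s ^^ N) (\<lambda>r. g r S)) r" by (rule Dr2s_apply[symmetric])
  also have "\<dots> = (Dr2s ^^ Suc N) (\<lambda>r. g r S) r" by simp
  finally show ?case .
qed

lemma Dr2s_local:
  assumes "\<forall>r\<in>{0<..1}. f r = g r"
  shows "r \<in> {0<..1} \<Longrightarrow> (Dr2s ^^ N) f r = (Dr2s ^^ N) g r"
proof (induction N arbitrary: r)
  case 0 thus ?case using assms by simp
next
  case (Suc N)
  define F where "F = (Dr2s ^^ N) f"
  define G where "G = (Dr2s ^^ N) g"
  have FG: "\<And>s. s \<in> {0<..1} \<Longrightarrow> F s = G s" using Suc.IH unfolding F_def G_def by blast
  have "\<And>x. (F has_vector_derivative x) (at r within {0<..1}) \<longleftrightarrow> (G has_vector_derivative x) (at r within {0<..1})"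
  proof
    fix x assume "(F has_vector_derivative x) (at r within {0<..1})"
    then show "(G has_vector_derivative x) (at r within {0<..1})"
      by (rule has_vector_derivative_transform[rotated 2]) (use FG Suc.prems in auto)
  next
    fix x assume "(G has_vector_derivative x) (at r within {0<..1})"
    then show "(F has_vector_derivative x) (at r within {0<..1})"
      by (rule has_vector_derivative_transform[rotated 2]) (use FG Suc.prems in auto)
  qed
  then have "vector_derivative F (at r within {0<..1}) = vector_derivative G (at r within {0<..1})"
    unfolding vector_derivative_def by simp
  then have "Dr2s F r = Dr2s G r" by (simp only: Dr2s_apply)
  then show ?case by (simp add: F_def G_def)
qed

lemma Dr2s_eq:
  assumes "r \<in> {0<..1}" "(f has_real_derivative f') (at r within {0<..1})"
  shows "Dr2s f r = f' / (2 * r)"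
proof -
  have "r islimpt {0<..1::real}" using assms(1) by simp
  then have nb: "at r within {0<..1} \<noteq> bot" using trivial_limit_within[of r "{0<..1::real}"]
    by (simp add: trivial_limit_def)
  have "(f has_vector_derivative f') (at r within {0<..1})"
    using assms(2) by (simp add: has_real_derivative_iff_has_vector_derivative)
  from vector_derivative_within[OF nb this] show ?thesis by (simp add: Dr2s_def)
qed

lemma GN_Dr2s:
  assumes "compact K"
  shows "GN N K us u \<Longrightarrow>
    (\<forall>e>0. eventually (\<lambda>j. \<forall>\<xi>\<in>K. \<bar>(Dr2s ^^ N) (us j \<xi>) 1 - (Dr2s ^^ N) (u \<xi>) 1\<bar> < e) sequentially)
    \<and> (\<forall>j. continuous_on K (\<lambda>\<xi>. (Dr2s ^^ N) (us j \<xi>) 1))"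
proof (induction N arbitrary: us u)
  case 0
  then have g: "G0 K us u" by simp
  have 1: "(1::real) \<in> {1/2..1}" by simp
  have "\<forall>e>0. eventually (\<lambda>j. \<forall>\<xi>\<in>K. \<bar>us j \<xi> 1 - u \<xi> 1\<bar> < e) sequentially"
  proof (intro allI impI)
    fix e :: real assume "e > 0"
    with g have "eventually (\<lambda>j. \<forall>\<xi>\<in>K. \<forall>r\<in>{1/2..1}. \<bar>us j \<xi> r - u \<xi> r\<bar> < e) sequentially"
      unfolding G0_def by blast
    then show "eventually (\<lambda>j. \<forall>\<xi>\<in>K. \<bar>us j \<xi> 1 - u \<xi> 1\<bar> < e) sequentially"
      by eventually_elim (use 1 in blast)
  qed
  moreover have "\<forall>j. continuous_on K (\<lambda>\<xi>. us j \<xi> 1)" using g 1 unfolding G0_def by blast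
  ultimately show ?case by simp
next
  case (Suc N)
  from Suc.prems obtain us' u' where a:
    "\<forall>j. \<forall>\<xi>\<in>K. \<forall>r\<in>{0<..1}. (us j \<xi> has_real_derivative us' j \<xi> r) (at r within {0<..1})"
    "\<forall>\<xi>\<in>K. \<forall>r\<in>{0<..1}. (u \<xi> has_real_derivative u' \<xi> r) (at r within {0<..1})"
    "GN N K us' u'" unfolding GN.simps by blast
  define vs where "vs = (\<lambda>j \<xi> r. us' j \<xi> r * ((\<lambda>_. 1/2::real) \<xi> * r powr (-1)))"
  define v where "v = (\<lambda>\<xi> r. u' \<xi> r * ((\<lambda>_. 1/2::real) \<xi> * r powr (-1)))"
  have "GN N K vs v" unfolding vs_def v_def
    by (rule GN_mult[OF a(3) GN_cpow[OF assms continuous_on_const]])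
  note IH = Suc.IH[OF this]
  have p: "1 / 2 * r powr - 1 = 1 / (2 * r)" if "r > 0" for r :: real
    using that by (simp add: powr_minus divide_simps)
  have e1: "(Dr2s ^^ Suc N) (us j \<xi>) 1 = (Dr2s ^^ N) (vs j \<xi>) 1" if "\<xi> \<in> K" for j \<xi>
  proof -
    have "\<forall>r\<in>{0<..1}. Dr2s (us j \<xi>) r = vs j \<xi> r"
    proof
      fix r :: real assume r: "r \<in> {0<..1}"
      have "Dr2s (us j \<xi>) r = us' j \<xi> r / (2 * r)" using Dr2s_eq[OF r] a(1) that r by blast
      also have "\<dots> = vs j \<xi> r" using r p[of r] by (simp add: vs_def)
      finally show "Dr2s (us j \<xi>) r = vs j \<xi> r" .
    qed
    from Dr2s_local[OF this, of 1 N] show ?thesis by (simp add: funpow_Suc_right del: funpow.simps)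
  qed
  have e2: "(Dr2s ^^ Suc N) (u \<xi>) 1 = (Dr2s ^^ N) (v \<xi>) 1" if "\<xi> \<in> K" for \<xi>
  proof -
    have "\<forall>r\<in>{0<..1}. Dr2s (u \<xi>) r = v \<xi> r"
    proof
      fix r :: real assume r: "r \<in> {0<..1}"
      have "Dr2s (u \<xi>) r = u' \<xi> r / (2 * r)" using Dr2s_eq[OF r] a(2) that r by blast
      also have "\<dots> = v \<xi> r" using r p[of r] by (simp add: v_def)
      finally show "Dr2s (u \<xi>) r = v \<xi> r" .
    qed
    from Dr2s_local[OF this, of 1 N] show ?thesis by (simp add: funpow_Suc_right del: funpow.simps)
  qed
  have c1: "\<forall>e>0. eventually (\<lambda>j. \<forall>\<xi>\<in>K. \<bar>(Dr2s ^^ Suc N) (us j \<xi>) 1 - (Dr2s ^^ Suc N) (u \<xi>) 1\<bar> < e) sequentially"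
  proof (intro allI impI)
    fix e :: real assume "e > 0"
    with IH have "eventually (\<lambda>j. \<forall>\<xi>\<in>K. \<bar>(Dr2s ^^ N) (vs j \<xi>) 1 - (Dr2s ^^ N) (v \<xi>) 1\<bar> < e) sequentially"
      by blast
    then show "eventually (\<lambda>j. \<forall>\<xi>\<in>K. \<bar>(Dr2s ^^ Suc N) (us j \<xi>) 1 - (Dr2s ^^ Suc N) (u \<xi>) 1\<bar> < e) sequentially"
      by eventually_elim (use e1 e2 in simp)
  qed
  have c2: "\<forall>j. continuous_on K (\<lambda>\<xi>. (Dr2s ^^ Suc N) (us j \<xi>) 1)"
  proof
    fix j
    have "continuous_on K (\<lambda>\<xi>. (Dr2s ^^ N) (vs j \<xi>) 1)" using IH by blast
    then show "continuous_on K (\<lambda>\<xi>. (Dr2s ^^ Suc N) (us j \<xi>) 1)"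
      using e1 by (metis (no_types, lifting) continuous_on_cong)
  qed
  show ?case using c1 c2 by blast
qed



definition UC :: "'a::topological_space set \<Rightarrow> (nat \<Rightarrow> 'a \<Rightarrow> real) \<Rightarrow> ('a \<Rightarrow> real) \<Rightarrow> bool" where
  "UC K gs g \<longleftrightarrow> (\<forall>e>0. eventually (\<lambda>j. \<forall>\<xi>\<in>K. \<bar>gs j \<xi> - g \<xi>\<bar> < e) sequentially)
      \<and> (\<forall>j. continuous_on K (gs j))"

lemma UC_add: assumes "UC K gs g" "UC K hs h"
  shows "UC K (\<lambda>j \<xi>. gs j \<xi> + hs j \<xi>) (\<lambda>\<xi>. g \<xi> + h \<xi>)"
proof -
  have "\<forall>e>0. eventually (\<lambda>j. \<forall>\<xi>\<in>K. \<bar>(gs j \<xi> + hs j \<xi>) - (g \<xi> + h \<xi>)\<bar> < e) sequentially"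
  proof (intro allI impI)
    fix e :: real assume "e > 0"
    then have "e/2 > 0" by simp
    with assms have "eventually (\<lambda>j. \<forall>\<xi>\<in>K. \<bar>gs j \<xi> - g \<xi>\<bar> < e/2) sequentially"
       "eventually (\<lambda>j. \<forall>\<xi>\<in>K. \<bar>hs j \<xi> - h \<xi>\<bar> < e/2) sequentially"
      unfolding UC_def by blast+
    then show "eventually (\<lambda>j. \<forall>\<xi>\<in>K. \<bar>(gs j \<xi> + hs j \<xi>) - (g \<xi> + h \<xi>)\<bar> < e) sequentially"
      by eventually_elim (auto intro: abs_add_half)
  qed
  moreover have "\<forall>j. continuous_on K (\<lambda>\<xi>. gs j \<xi> + hs j \<xi>)"
    using assms unfolding UC_def by (auto intro: continuous_on_add)
  ultimately show ?thesis unfolding UC_def by blast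
qed

lemma UC_zero: "UC K (\<lambda>j \<xi>. 0) (\<lambda>\<xi>. 0)"
  unfolding UC_def by auto

lemma UC_cmult: assumes "UC K gs g"
  shows "UC K (\<lambda>j \<xi>. c * gs j \<xi>) (\<lambda>\<xi>. c * g \<xi>)"
proof -
  have "\<forall>e>0. eventually (\<lambda>j. \<forall>\<xi>\<in>K. \<bar>c * gs j \<xi> - c * g \<xi>\<bar> < e) sequentially"
  proof (intro allI impI)
    fix e :: real assume e: "e > 0"
    then have e2: "e / (\<bar>c\<bar> + 1) > 0" by simp
    with assms have "eventually (\<lambda>j. \<forall>\<xi>\<in>K. \<bar>gs j \<xi> - g \<xi>\<bar> < e / (\<bar>c\<bar> + 1)) sequentially"
      unfolding UC_def by blast
    then show "eventually (\<lambda>j. \<forall>\<xi>\<in>K. \<bar>c * gs j \<xi> - c * g \<xi>\<bar> < e) sequentially"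
    proof eventually_elim
      case (elim j)
      show ?case
      proof
        fix \<xi> assume "\<xi> \<in> K"
        then have x: "\<bar>gs j \<xi> - g \<xi>\<bar> < e / (\<bar>c\<bar> + 1)" using elim by blast
        have "\<bar>c * gs j \<xi> - c * g \<xi>\<bar> = \<bar>c\<bar> * \<bar>gs j \<xi> - g \<xi>\<bar>"
          by (simp add: abs_mult[symmetric] right_diff_distrib)
        also have "\<dots> \<le> (\<bar>c\<bar> + 1) * \<bar>gs j \<xi> - g \<xi>\<bar>" by (simp add: distrib_right)
        also have "\<dots> < (\<bar>c\<bar> + 1) * (e / (\<bar>c\<bar> + 1))"
          using x by (intro mult_strict_left_mono) auto
        also have "\<dots> = e" by simp
        finally show "\<bar>c * gs j \<xi> - c * g \<xi>\<bar> < e" .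
      qed
    qed
  qed
  moreover have "\<forall>j. continuous_on K (\<lambda>\<xi>. c * gs j \<xi>)"
    using assms unfolding UC_def by (auto intro: continuous_on_mult continuous_on_const)
  ultimately show ?thesis unfolding UC_def by blast
qed

lemma UC_sum: "(\<And>i. i \<in> I \<Longrightarrow> UC K (gs i) (g i)) \<Longrightarrow>
   UC K (\<lambda>j \<xi>. \<Sum>i\<in>I. gs i j \<xi>) (\<lambda>\<xi>. \<Sum>i\<in>I. g i \<xi>)"
proof (cases "finite I")
  case False thus ?thesis by (simp add: UC_zero)
next
  case True
  assume "\<And>i. i \<in> I \<Longrightarrow> UC K (gs i) (g i)"
  with True show ?thesis
  proof (induction I rule: finite_induct)
    case empty thus ?case by (simp add: UC_zero)
  next
    case (insert x F)
    then show ?case by (simp add: UC_add)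
  qed
qed

lemma UC_GN:
  assumes "compact K" "GN N K us u"
  shows "UC K (\<lambda>j \<xi>. (Dr2s ^^ N) (us j \<xi>) 1) (\<lambda>\<xi>. (Dr2s ^^ N) (u \<xi>) 1)"
  using GN_Dr2s[OF assms] unfolding UC_def by blast

lemma norm_div_norm_le: "norm (x /\<^sub>R norm x) \<le> 1"
  by (simp flip: sgn_div_norm add: norm_sgn)

lemma integrable_sphere_fun:
  fixes h :: "real^'m \<Rightarrow> real"
  assumes "continuous_on (cball 0 1) h"
  shows "(\<lambda>x. h (x /\<^sub>R norm x)) integrable_on cball 0 1"
proof -
  let ?K = "cball (0::real^'m) 1"
  have img: "(\<lambda>x. x /\<^sub>R norm x) ` (?K - {0}) \<subseteq> ?K"
    by (intro image_subsetI) (simp only: mem_cball_0 norm_div_norm_le)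
  have c1: "continuous_on (?K - {0}) (\<lambda>x. x /\<^sub>R norm x)"
    by (intro continuous_intros) auto
  have cont: "continuous_on (?K - {0}) (\<lambda>x. h (x /\<^sub>R norm x))"
    using continuous_on_compose2[OF assms c1 img] .
  have KL: "?K - {0} \<in> lmeasurable"
    by (intro fmeasurable_Diff lmeasurable_cball) simp
  then have KS: "?K - {0} \<in> sets lebesgue" by (simp add: fmeasurableD)
  have meas: "(\<lambda>x. h (x /\<^sub>R norm x)) \<in> borel_measurable (lebesgue_on (?K - {0}))"
    by (rule continuous_imp_measurable_on_sets_lebesgue[OF cont KS])
  have "bounded (h ` ?K)" by (intro compact_imp_bounded compact_continuous_image assms) simp
  then obtain B where B: "\<forall>x\<in>h ` ?K. norm x \<le> B" by (auto simp: bounded_iff)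
  have bnd: "norm (h (x /\<^sub>R norm x)) \<le> B" for x
  proof -
    have "x /\<^sub>R norm x \<in> ?K" by (simp only: mem_cball_0 norm_div_norm_le)
    then show ?thesis using B by blast
  qed
  have "(\<lambda>x. h (x /\<^sub>R norm x)) integrable_on (?K - {0})"
    by (rule measurable_bounded_by_integrable_imp_integrable[OF meas integrable_on_const[OF KL] _ KS])
       (use bnd in auto)
  then show ?thesis
    by (rule integrable_spike_set) (auto intro: negligible_subset[OF negligible_sing[of 0]])
qed

lemma sphere_int_conv:
  fixes gs :: "nat \<Rightarrow> real^'m \<Rightarrow> real"
  assumes uc: "UC (cball 0 1) gs g"
  shows "(\<lambda>j. sphere_int (gs j)) \<longlonglongrightarrow> sphere_int g"
proof -
  let ?K = "cball (0::real^'m) 1"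
  have inK: "x /\<^sub>R norm x \<in> ?K" for x :: "real^'m" by (simp only: mem_cball_0 norm_div_norm_le)
  obtain J where J: "\<And>j. j \<ge> J \<Longrightarrow> \<forall>\<xi>\<in>?K. \<bar>gs j \<xi> - g \<xi>\<bar> < 1"
    using uc unfolding UC_def eventually_sequentially by (meson zero_less_one)
  have "bounded (gs J ` ?K)" using uc unfolding UC_def
    by (intro compact_imp_bounded compact_continuous_image) auto
  then obtain B where B: "\<forall>x\<in>gs J ` ?K. norm x \<le> B" by (auto simp: bounded_iff)
  have le: "norm (gs (k + J) (x /\<^sub>R norm x)) \<le> B + 2" for k x
  proof -
    have a: "\<bar>gs (k + J) (x /\<^sub>R norm x) - g (x /\<^sub>R norm x)\<bar> < 1" using J[of "k + J"] inK by auto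
    have b: "\<bar>gs J (x /\<^sub>R norm x) - g (x /\<^sub>R norm x)\<bar> < 1" using J[of J] inK by auto
    have c: "\<bar>gs J (x /\<^sub>R norm x)\<bar> \<le> B" using B inK by auto
    show ?thesis using a b c by simp
  qed
  have intg: "(\<lambda>x. gs (k + J) (x /\<^sub>R norm x)) integrable_on ?K" for k
    using uc unfolding UC_def by (intro integrable_sphere_fun) auto
  have conv: "(\<lambda>k. gs (k + J) (x /\<^sub>R norm x)) \<longlonglongrightarrow> g (x /\<^sub>R norm x)" for x
  proof -
    have "(\<lambda>j. gs j (x /\<^sub>R norm x)) \<longlonglongrightarrow> g (x /\<^sub>R norm x)"
    proof (rule tendstoI)
      fix e :: real assume "e > 0"
      with uc have "eventually (\<lambda>j. \<forall>\<xi>\<in>?K. \<bar>gs j \<xi> - g \<xi>\<bar> < e) sequentially"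
        unfolding UC_def by blast
      then show "eventually (\<lambda>j. dist (gs j (x /\<^sub>R norm x)) (g (x /\<^sub>R norm x)) < e) sequentially"
        by eventually_elim (use inK in \<open>auto simp: dist_real_def\<close>)
    qed
    then show ?thesis by (rule LIMSEQ_ignore_initial_segment)
  qed
  have "(\<lambda>k. integral ?K (\<lambda>x. gs (k + J) (x /\<^sub>R norm x))) \<longlonglongrightarrow> integral ?K (\<lambda>x. g (x /\<^sub>R norm x))"
    by (rule dominated_convergence(2)[OF intg integrable_on_const[OF lmeasurable_cball] le conv])
  then have "(\<lambda>k. integral ?K (\<lambda>x. gs k (x /\<^sub>R norm x))) \<longlonglongrightarrow> integral ?K (\<lambda>x. g (x /\<^sub>R norm x))"
    by (rule LIMSEQ_offset)
  then show ?thesis unfolding sphere_int_def by (intro tendsto_mult_left)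
qed



definition supp :: "nat \<Rightarrow> grass \<Rightarrow> nat \<Rightarrow> bool" where
  "supp n A d \<longleftrightarrow> (\<forall>S. A S \<noteq> 0 \<longrightarrow> card (S \<inter> {..<2*n}) = d)"

lemma supp_gone: "supp n gone 0"
  by (simp add: supp_def gone_def)

lemma supp_gen1: "k < 2*n \<Longrightarrow> supp n (gen k) 1"
  by (simp add: supp_def gen_def)

lemma supp_gen0: "\<not> k < 2*n \<Longrightarrow> supp n (gen k) 0"
  by (simp add: supp_def gen_def)

lemma supp_gmul:
  assumes "supp n A a" "supp n B b"
  shows "supp n (gmul A B) (a + b)"
  unfolding supp_def
proof (intro allI impI)
  fix S assume "gmul A B S \<noteq> 0"
  then have "(\<Sum>T\<in>Pow S. gsign T (S - T) * A T * B (S - T)) \<noteq> 0" by (simp add: gmul_def)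
  then obtain T where T: "T \<in> Pow S" "gsign T (S - T) * A T * B (S - T) \<noteq> 0"
    by (rule sum.not_neutral_contains_not_neutral)
  then have "A T \<noteq> 0" "B (S - T) \<noteq> 0" by auto
  then have ca: "card (T \<inter> {..<2*n}) = a" and cb: "card ((S - T) \<inter> {..<2*n}) = b"
    using assms unfolding supp_def by blast+
  have eq: "S \<inter> {..<2*n} = (T \<inter> {..<2*n}) \<union> ((S - T) \<inter> {..<2*n})" using T(1) by auto
  have "card (S \<inter> {..<2*n}) = card (T \<inter> {..<2*n}) + card ((S - T) \<inter> {..<2*n})"
    unfolding eq by (rule card_Un_disjoint) auto
  then show "card (S \<inter> {..<2*n}) = a + b" using ca cb by simp
qed

lemma supp_gadd: "supp n A d \<Longrightarrow> supp n B d \<Longrightarrow> supp n (gadd A B) d"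
  unfolding supp_def gadd_def by force

lemma supp_gscale: "supp n A d \<Longrightarrow> supp n (gscale c A) d"
  unfolding supp_def gscale_def by force

lemma supp_gsum: "(\<And>i. i \<in> I \<Longrightarrow> supp n (f i) d) \<Longrightarrow> supp n (gsum f I) d"
  unfolding supp_def gsum_def
proof (intro allI impI)
  fix S assume a: "\<And>i. i \<in> I \<Longrightarrow> \<forall>S. f i S \<noteq> 0 \<longrightarrow> card (S \<inter> {..<2 * n}) = d"
    and "(\<Sum>i\<in>I. f i S) \<noteq> 0"
  then obtain i where "i \<in> I" "f i S \<noteq> 0" by (meson sum.not_neutral_contains_not_neutral)
  then show "card (S \<inter> {..<2 * n}) = d" using a by blast
qed

lemma supp_gpow: "supp n A a \<Longrightarrow> supp n (gpow A k) (k * a)"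
  by (induction k) (auto simp: supp_gone dest: supp_gmul)

lemma supp_fip: "supp n (fip n) 1"
  unfolding fip_def
proof (rule supp_gscale, rule supp_gsum, rule supp_gadd)
  fix j assume "j \<in> {..<n}"
  then have j: "2*j < 2*n" "2*j+1 < 2*n" by auto
  show "supp n (gmul (gen (2 * j)) (gen (2 * n + 2 * j + 1))) 1"
    using supp_gmul[OF supp_gen1[OF j(1)] supp_gen0[of "2 * n + 2 * j + 1" n]] by simp
  show "supp n (gscale (- 1) (gmul (gen (2 * j + 1)) (gen (2 * n + 2 * j)))) 1"
    using supp_gscale[OF supp_gmul[OF supp_gen1[OF j(2)] supp_gen0[of "2 * n + 2 * j" n]]] by simp
qed

lemma supp_xsq: "supp n (xsq n) 2"
  unfolding xsq_def
proof (intro supp_gsum)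
  fix j assume "j \<in> {..<n}"
  then have j: "2*j < 2*n" "2*j+1 < 2*n" by auto
  have "supp n (gmul (gen (2 * j)) (gen (2 * j + 1))) (1 + 1)"
    by (rule supp_gmul[OF supp_gen1[OF j(1)] supp_gen1[OF j(2)]])
  then show "supp n (gmul (gen (2 * j)) (gen (2 * j + 1))) 2" by (simp add: numeral_2_eq_2)
qed

lemma bder_form: "\<exists>c. \<forall>A. bder k A S = c * A (S \<union> {..<k}) \<and> (c \<noteq> 0 \<longrightarrow> S \<inter> {..<k} = {})"
proof (induction k arbitrary: S)
  case 0 thus ?case by (intro exI[of _ 1]) simp
next
  case (Suc k)
  show ?case
  proof (cases "k \<in> S")
    case True
    then show ?thesis by (intro exI[of _ 0]) (simp add: gderiv_def)
  next
    case False
    obtain c where c: "\<forall>A. bder k A (insert k S) = c * A (insert k S \<union> {..<k}) \<and> (c \<noteq> 0 \<longrightarrow> insert k S \<inter> {..<k} = {})"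
      using Suc.IH by blast
    have eq: "insert k S \<union> {..<k} = S \<union> {..<Suc k}" by auto
    show ?thesis
    proof (intro exI[of _ "(-1) ^ card {s\<in>S. s < k} * c"] allI conjI impI)
      fix A
      show "bder (Suc k) A S = (-1) ^ card {s\<in>S. s < k} * c * A (S \<union> {..<Suc k})"
        using False c eq by (simp add: gderiv_def)
    next
      assume "(-1) ^ card {s\<in>S. s < k} * c \<noteq> (0::real)"
      then have "c \<noteq> 0" by auto
      then have "insert k S \<inter> {..<k} = {}" using c by blast
      then show "S \<inter> {..<Suc k} = {}" using False by (auto simp: less_Suc_eq)
    qed
  qed
qed



lemma F_expand:
  fixes H :: "real^'m::finite \<Rightarrow> grass" and \<xi> y :: "real^'m"
  assumes hom: "\<forall>S'. H (r *\<^sub>R \<xi>) S' = r ^ (l - card S') * H \<xi> S'" and r: "r > 0"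
  shows "r powr e0 * gmul (zonal n d (r *\<^sub>R \<xi>) y) (H (r *\<^sub>R \<xi>)) U =
   (\<Sum>V\<in>Pow U. \<Sum>k\<in>{0..2*n}. d k (r * (\<xi> \<bullet> y)) *
      (gsign V (U - V) * gpow (fip n) k V / fact k * H \<xi> (U - V) * r powr (e0 + real (l - card (U - V)))))"
proof -
  have "gmul (zonal n d (r *\<^sub>R \<xi>) y) (H (r *\<^sub>R \<xi>)) U =
     (\<Sum>V\<in>Pow U. gsign V (U - V) * (\<Sum>k\<in>{0..2*n}. d k (r * (\<xi> \<bullet> y)) / fact k * gpow (fip n) k V)
        * (r ^ (l - card (U - V)) * H \<xi> (U - V)))"
    by (simp add: gmul_def zonal_def gsum_def gscale_def hom)
  also have "\<dots> = (\<Sum>V\<in>Pow U. gsign V (U - V) * (\<Sum>k\<in>{0..2*n}. d k (r * (\<xi> \<bullet> y)) / fact k * gpow (fip n) k V)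
        * (r powr real (l - card (U - V)) * H \<xi> (U - V)))"
    using r by (simp add: powr_realpow)
  finally have 1: "gmul (zonal n d (r *\<^sub>R \<xi>) y) (H (r *\<^sub>R \<xi>)) U = \<dots>" .
  have 2: "r powr (e0 + real q) = r powr e0 * r powr real q" for q by (simp add: powr_add)
  show ?thesis unfolding 1 2
    by (simp add: sum_distrib_left sum_distrib_right algebra_simps)
qed

lemma hom_H:
  assumes "H \<in> harmonic_space n l"
  shows "H (r *\<^sub>R \<xi>) S' = r ^ (l - card S') * H \<xi> S'"
proof (cases "card S' \<le> l")
  case True thus ?thesis using assms unfolding harmonic_space_def by blast
next
  case False
  then have "l < card S'" by simp
  then show ?thesis using assms unfolding harmonic_space_def by simp
qed

lemma GN_core:
  fixes H :: "real^'m::finite \<Rightarrow> grass" and y :: "real^'m" and p :: "nat \<Rightarrow> real poly"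
  assumes Hh: "H \<in> harmonic_space n l"
    and Ck: "Ck_on (2*n) {-a..a} \<phi>"
    and ucp: "\<forall>i\<le>2*n. uniform_limit {-a..a} (\<lambda>j. poly ((pderiv ^^ i) (p j)))
                                       (hderiv {-a..a} \<phi> i) sequentially"
    and y: "y \<in> cball 0 a"
    and NU: "N + card (U \<inter> {..<2*n}) \<le> 2*n"
  shows "GN N (cball 0 1)
     (\<lambda>j \<xi> r. r powr e0 * gmul (zonal n (\<lambda>i. poly ((pderiv ^^ i) (p j))) (r *\<^sub>R \<xi>) y) (H (r *\<^sub>R \<xi>)) U)
     (\<lambda>\<xi> r. r powr e0 * gmul (zonal n (hderiv {-a..a} \<phi>) (r *\<^sub>R \<xi>) y) (H (r *\<^sub>R \<xi>)) U)"
proof -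
  let ?K = "cball (0::real^'m) 1"
  have cK: "compact ?K" by simp
  have qd: "\<forall>i<2*n. \<forall>j x. ((\<lambda>i j. poly ((pderiv ^^ i) (p j))) i j has_real_derivative
        (\<lambda>i j. poly ((pderiv ^^ i) (p j))) (Suc i) j x) (at x)"
    by simp
  have Qd: "\<forall>i<2*n. \<forall>x\<in>{-a..a}. (hderiv {-a..a} \<phi> i has_real_derivative hderiv {-a..a} \<phi> (Suc i) x) (at x within {-a..a})"
    using Ck unfolding Ck_on_def by blast
  have qc: "\<forall>i j. continuous_on UNIV ((\<lambda>i j. poly ((pderiv ^^ i) (p j))) i j)"
    by (intro allI continuous_on_poly continuous_on_id)
  have Qc: "\<forall>i\<le>2*n. continuous_on {-a..a} (hderiv {-a..a} \<phi> i)"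
  proof (intro allI impI)
    fix i assume i: "i \<le> 2*n"
    show "continuous_on {-a..a} (hderiv {-a..a} \<phi> i)"
    proof (cases "i < 2*n")
      case True
      then show ?thesis using Qd by (intro DERIV_continuous_on) blast
    next
      case False
      then have "i = 2*n" using i by simp
      then show ?thesis using Ck unfolding Ck_on_def by simp
    qed
  qed
  have cc1: "continuous_on ?K (\<lambda>\<xi>. \<xi> \<bullet> y)" by (intro continuous_intros)
  have cc2: "\<forall>\<xi>\<in>?K. \<bar>\<xi> \<bullet> y\<bar> \<le> a"
  proof
    fix \<xi> assume "\<xi> \<in> ?K"
    then have "norm \<xi> \<le> 1" by simp
    moreover have "norm y \<le> a" using y by simp
    ultimately have "norm \<xi> * norm y \<le> 1 * a" by (intro mult_mono) auto
    then show "\<bar>\<xi> \<bullet> y\<bar> \<le> a" using Cauchy_Schwarz_ineq2[of \<xi> y] by simp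
  qed
  have psi: "i + M \<le> 2*n \<Longrightarrow> GN M ?K (\<lambda>j \<xi> r. poly ((pderiv ^^ i) (p j)) (r * (\<xi> \<bullet> y)))
      (\<lambda>\<xi> r. hderiv {-a..a} \<phi> i (r * (\<xi> \<bullet> y)))" for i M
    using GN_psi[where qs="\<lambda>i j. poly ((pderiv ^^ i) (p j))" and Q="hderiv {-a..a} \<phi>"
        and M="2*n" and a=a and K="?K" and c="\<lambda>\<xi>. \<xi> \<bullet> y", OF qd Qd qc Qc ucp cc1 cc2 cK]
    by simp
  have Hc: "continuous_on ?K (\<lambda>\<xi>. H \<xi> S')" for S'
    using Hh unfolding harmonic_space_def by (intro continuous_on_polymonial_function) blast
  have trm: "GN N ?K
      (\<lambda>j \<xi> r. poly ((pderiv ^^ k) (p j)) (r * (\<xi> \<bullet> y)) *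
         (gsign V (U - V) * gpow (fip n) k V / fact k * H \<xi> (U - V) * r powr (e0 + real (l - card (U - V)))))
      (\<lambda>\<xi> r. hderiv {-a..a} \<phi> k (r * (\<xi> \<bullet> y)) *
         (gsign V (U - V) * gpow (fip n) k V / fact k * H \<xi> (U - V) * r powr (e0 + real (l - card (U - V)))))"
    if V: "V \<in> Pow U" and k: "k \<in> {0..2*n}" for V k
  proof (cases "gpow (fip n) k V = 0")
    case True
    show ?thesis by (rule GN_transform[OF GN_zero[of N ?K]]) (simp_all add: True)
  next
    case False
    have "supp n (gpow (fip n) k) (k * 1)" by (rule supp_gpow[OF supp_fip])
    then have ck: "card (V \<inter> {..<2*n}) = k" using False unfolding supp_def by simp
    have "card (V \<inter> {..<2*n}) \<le> card (U \<inter> {..<2*n})" using V by (intro card_mono) auto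
    then have kN: "k + N \<le> 2*n" using ck NU by simp
    have c2: "continuous_on ?K (\<lambda>\<xi>. gsign V (U - V) * gpow (fip n) k V / fact k * H \<xi> (U - V))"
      by (intro continuous_on_mult continuous_on_const Hc)
    show ?thesis by (rule GN_mult[OF psi[OF kN] GN_cpow[OF cK c2]])
  qed
  have W: "GN N ?K
      (\<lambda>j \<xi> r. \<Sum>V\<in>Pow U. \<Sum>k\<in>{0..2*n}. poly ((pderiv ^^ k) (p j)) (r * (\<xi> \<bullet> y)) *
         (gsign V (U - V) * gpow (fip n) k V / fact k * H \<xi> (U - V) * r powr (e0 + real (l - card (U - V)))))
      (\<lambda>\<xi> r. \<Sum>V\<in>Pow U. \<Sum>k\<in>{0..2*n}. hderiv {-a..a} \<phi> k (r * (\<xi> \<bullet> y)) *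
         (gsign V (U - V) * gpow (fip n) k V / fact k * H \<xi> (U - V) * r powr (e0 + real (l - card (U - V)))))"
    by (intro GN_sum trm)
  have hom: "\<forall>S'. H (r *\<^sub>R \<xi>) S' = r ^ (l - card S') * H \<xi> S'" for r \<xi> using hom_H[OF Hh] by blast
  show ?thesis
  proof (rule GN_transform[OF W])
    show "\<forall>j. \<forall>\<xi>\<in>?K. \<forall>r\<in>{0<..1}. (\<Sum>V\<in>Pow U. \<Sum>k\<in>{0..2*n}. poly ((pderiv ^^ k) (p j)) (r * (\<xi> \<bullet> y)) *
         (gsign V (U - V) * gpow (fip n) k V / fact k * H \<xi> (U - V) * r powr (e0 + real (l - card (U - V)))))
        = r powr e0 * gmul (zonal n (\<lambda>i. poly ((pderiv ^^ i) (p j))) (r *\<^sub>R \<xi>) y) (H (r *\<^sub>R \<xi>)) U"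
    proof (intro allI ballI)
      fix j \<xi> and r :: real assume "r \<in> {0<..1}"
      then have "r > 0" by simp
      from F_expand[OF hom[of r \<xi>] this, of e0 n "\<lambda>i. poly ((pderiv ^^ i) (p j))" y U]
      show "(\<Sum>V\<in>Pow U. \<Sum>k\<in>{0..2*n}. poly ((pderiv ^^ k) (p j)) (r * (\<xi> \<bullet> y)) *
         (gsign V (U - V) * gpow (fip n) k V / fact k * H \<xi> (U - V) * r powr (e0 + real (l - card (U - V)))))
        = r powr e0 * gmul (zonal n (\<lambda>i. poly ((pderiv ^^ i) (p j))) (r *\<^sub>R \<xi>) y) (H (r *\<^sub>R \<xi>)) U"
        by simp
    qed
    show "\<forall>\<xi>\<in>?K. \<forall>r\<in>{0<..1}. (\<Sum>V\<in>Pow U. \<Sum>k\<in>{0..2*n}. hderiv {-a..a} \<phi> k (r * (\<xi> \<bullet> y)) *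
         (gsign V (U - V) * gpow (fip n) k V / fact k * H \<xi> (U - V) * r powr (e0 + real (l - card (U - V)))))
        = r powr e0 * gmul (zonal n (hderiv {-a..a} \<phi>) (r *\<^sub>R \<xi>) y) (H (r *\<^sub>R \<xi>)) U"
    proof (intro allI ballI)
      fix \<xi> and r :: real assume "r \<in> {0<..1}"
      then have "r > 0" by simp
      from F_expand[OF hom[of r \<xi>] this, of e0 n "hderiv {-a..a} \<phi>" y U]
      show "(\<Sum>V\<in>Pow U. \<Sum>k\<in>{0..2*n}. hderiv {-a..a} \<phi> k (r * (\<xi> \<bullet> y)) *
         (gsign V (U - V) * gpow (fip n) k V / fact k * H \<xi> (U - V) * r powr (e0 + real (l - card (U - V)))))
        = r powr e0 * gmul (zonal n (hderiv {-a..a} \<phi>) (r *\<^sub>R \<xi>) y) (H (r *\<^sub>R \<xi>)) U"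
        by simp
    qed
  qed
qed



theorem lemma22:
  fixes n l :: nat and a :: real and \<phi> :: "real \<Rightarrow> real"
    and p :: "nat \<Rightarrow> real poly" and H :: "real^'m::finite \<Rightarrow> grass" and y :: "real^'m"
  assumes "a > 0"
    and "Ck_on (2*n) {-a..a} \<phi>"
    and "\<forall>i\<le>2*n. uniform_limit {-a..a} (\<lambda>j. poly ((pderiv ^^ i) (p j)))
                                       (hderiv {-a..a} \<phi> i) sequentially"
    and "H \<in> harmonic_space n l"
    and "y \<in> cball 0 a"
  shows "\<forall>S. (\<lambda>j. SSI n (\<lambda>x. gmul (zonal n (\<lambda>i. poly ((pderiv ^^ i) (p j))) x y) (H x)) S)
             \<longlonglongrightarrow> SSI n (\<lambda>x. gmul (zonal n (hderiv {-a..a} \<phi>) x y) (H x)) S"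
proof
  fix S
  let ?K = "cball (0::real^'m) 1"
  define e0 where "e0 = real CARD('m) - 2"
  define T where "T = S \<union> {..<2*n}"
  obtain c where c: "\<forall>A. bder (2*n) A S = c * A (S \<union> {..<2*n}) \<and> (c \<noteq> 0 \<longrightarrow> S \<inter> {..<2*n} = {})"
    using bder_form by blast
  have UCjj: "UC ?K
      (\<lambda>j \<xi>. berezin n (gmul (gscale (1 / fact jj) (gpow (xsq n) jj))
          ((Dr2 ^^ jj) (\<lambda>r. gscale (r powr e0) (gmul (zonal n (\<lambda>i. poly ((pderiv ^^ i) (p j))) (r *\<^sub>R \<xi>) y) (H (r *\<^sub>R \<xi>)))) 1)) S)
      (\<lambda>\<xi>. berezin n (gmul (gscale (1 / fact jj) (gpow (xsq n) jj))
          ((Dr2 ^^ jj) (\<lambda>r. gscale (r powr e0) (gmul (zonal n (hderiv {-a..a} \<phi>) (r *\<^sub>R \<xi>) y) (H (r *\<^sub>R \<xi>)))) 1)) S)"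
    if jj: "jj \<in> {0..n}" for jj
  proof -
    define C where "C = gscale (1 / fact jj) (gpow (xsq n) jj)"
    have expand: "berezin n (gmul C ((Dr2 ^^ jj) (\<lambda>r. gscale (r powr e0) (G r)) 1)) S =
       1 / pi ^ n * (c * (\<Sum>T'\<in>Pow T. (gsign T' (T - T') * C T') *
          (Dr2s ^^ jj) (\<lambda>r. r powr e0 * G r (T - T')) 1))" for G
      using c by (simp add: berezin_def gscale_def gmul_def Dr2_coeff T_def mult.assoc)
    show ?thesis
    proof (cases "c = 0")
      case True
      then show ?thesis unfolding C_def[symmetric] expand by (simp add: UC_zero)
    next
      case False
      then have SX: "S \<inter> {..<2*n} = {}" using c by blast
      have "UC ?K (\<lambda>j \<xi>. (gsign T' (T - T') * C T') *
          (Dr2s ^^ jj) (\<lambda>r. r powr e0 * gmul (zonal n (\<lambda>i. poly ((pderiv ^^ i) (p j))) (r *\<^sub>R \<xi>) y) (H (r *\<^sub>R \<xi>)) (T - T')) 1)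
        (\<lambda>\<xi>. (gsign T' (T - T') * C T') *
          (Dr2s ^^ jj) (\<lambda>r. r powr e0 * gmul (zonal n (hderiv {-a..a} \<phi>) (r *\<^sub>R \<xi>) y) (H (r *\<^sub>R \<xi>)) (T - T')) 1)"
        if T': "T' \<in> Pow T" for T'
      proof (cases "C T' = 0")
        case True
        then show ?thesis by (simp add: UC_zero)
      next
        case False
        have "supp n C (jj * 2)" unfolding C_def by (intro supp_gscale supp_gpow supp_xsq)
        then have cT: "card (T' \<inter> {..<2*n}) = jj * 2" using False unfolding supp_def by blast
        have eqU: "(T - T') \<inter> {..<2*n} = {..<2*n} - T'" unfolding T_def by auto
        have "card ({..<2*n} - T') = card {..<2*n} - card ({..<2*n} \<inter> T')"
          by (rule card_Diff_subset_Int) simp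
        also have "{..<2*n} \<inter> T' = T' \<inter> {..<2*n}" by auto
        finally have cU: "card ((T - T') \<inter> {..<2*n}) = 2*n - jj * 2" using cT eqU by simp
        have "card (T' \<inter> {..<2*n}) \<le> card {..<2*n}" by (intro card_mono) auto
        then have "jj * 2 \<le> 2 * n" using cT by simp
        then have NU: "jj + card ((T - T') \<inter> {..<2*n}) \<le> 2*n" using cU by simp
        have "GN jj ?K
           (\<lambda>j \<xi> r. r powr e0 * gmul (zonal n (\<lambda>i. poly ((pderiv ^^ i) (p j))) (r *\<^sub>R \<xi>) y) (H (r *\<^sub>R \<xi>)) (T - T'))
           (\<lambda>\<xi> r. r powr e0 * gmul (zonal n (hderiv {-a..a} \<phi>) (r *\<^sub>R \<xi>) y) (H (r *\<^sub>R \<xi>)) (T - T'))"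
          by (rule GN_core[OF assms(4) assms(2) assms(3) assms(5) NU])
        from UC_cmult[OF UC_GN[OF compact_cball this], of "gsign T' (T - T') * C T'"]
        show ?thesis .
      qed
      then have "UC ?K (\<lambda>j \<xi>. \<Sum>T'\<in>Pow T. (gsign T' (T - T') * C T') *
          (Dr2s ^^ jj) (\<lambda>r. r powr e0 * gmul (zonal n (\<lambda>i. poly ((pderiv ^^ i) (p j))) (r *\<^sub>R \<xi>) y) (H (r *\<^sub>R \<xi>)) (T - T')) 1)
        (\<lambda>\<xi>. \<Sum>T'\<in>Pow T. (gsign T' (T - T') * C T') *
          (Dr2s ^^ jj) (\<lambda>r. r powr e0 * gmul (zonal n (hderiv {-a..a} \<phi>) (r *\<^sub>R \<xi>) y) (H (r *\<^sub>R \<xi>)) (T - T')) 1)"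
        by (rule UC_sum)
      from UC_cmult[OF UC_cmult[OF this, of c], of "1 / pi ^ n"]
      show ?thesis unfolding C_def[symmetric] expand .
    qed
  qed
  have "(\<lambda>j. \<Sum>jj\<in>{0..n}. sphere_int (\<lambda>\<xi>. berezin n (gmul (gscale (1 / fact jj) (gpow (xsq n) jj))
          ((Dr2 ^^ jj) (\<lambda>r. gscale (r powr e0) (gmul (zonal n (\<lambda>i. poly ((pderiv ^^ i) (p j))) (r *\<^sub>R \<xi>) y) (H (r *\<^sub>R \<xi>)))) 1)) S))
      \<longlonglongrightarrow> (\<Sum>jj\<in>{0..n}. sphere_int (\<lambda>\<xi>. berezin n (gmul (gscale (1 / fact jj) (gpow (xsq n) jj))
          ((Dr2 ^^ jj) (\<lambda>r. gscale (r powr e0) (gmul (zonal n (hderiv {-a..a} \<phi>) (r *\<^sub>R \<xi>) y) (H (r *\<^sub>R \<xi>)))) 1)) S))"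
    by (intro tendsto_sum sphere_int_conv UCjj)
  then show "(\<lambda>j. SSI n (\<lambda>x. gmul (zonal n (\<lambda>i. poly ((pderiv ^^ i) (p j))) x y) (H x)) S)
             \<longlonglongrightarrow> SSI n (\<lambda>x. gmul (zonal n (hderiv {-a..a} \<phi>) x y) (H x)) S"
    by (simp add: SSI_def gsum_def e0_def)
qed

end
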